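(* Let $f_j$, $j\in J=\{1,\dots,m\}$, be functions on $\mathbb{R}^n$, each strongly convex with constant $\mu_j>0$; let $D=\{x: f_j(x)\le 0,\ j\in J\}$ satisfy the Slater condition; let $f$ be a convex function attaining its minimum on $D$, such that no point of absolute minimum of $f$ on $\mathbb{R}^n$ (if one exists) lies in $\operatorname{int}D$. Let $x^*$ be the (unique) solution of $\min\{f(x):x\in D\}$, $f^*=f(x^* )$, $E^*=\{x\in\mathbb{R}^n: f(x)\le f^*\}$, $F(x)=\max_{j\in J}f_j(x)$, $\mu=\min_j\mu_j$, $D_\varepsilon=\{x:F(x)\le\varepsilon\}$. Let $\varepsilon>0$. Then every point $y\in D_\varepsilon\cap E^*$ with $y\ne x^*$ satisfies $\|y-x^*\|\le\sqrt{\varepsilon/\mu}$; if moreover $f$ satisfies a Lipschitz condition with constant $L$, then also $|f(y)-f^*|\le L\sqrt{\varepsilon/\mu}$.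
   Context: Each set $D_j=\{x:f_j(x)\le0\}$ is assumed to have nonempty interior. *)

theory Defs
  imports "HOL-Analysis.Analysis"
begin

text \<open>Strong convexity with constant mu (convention without the factor 1/2):
  g(a x + (1-a) y) \<le> a g x + (1-a) g y - a (1-a) mu |x-y|^2.\<close>
definition strongly_convex_on :: "'a::real_normed_vector set \<Rightarrow> real \<Rightarrow> ('a \<Rightarrow> real) \<Rightarrow> bool" where
  "strongly_convex_on S mu g \<longleftrightarrow> convex S \<and>
     (\<forall>x\<in>S. \<forall>y\<in>S. \<forall>a::real. 0 \<le> a \<and> a \<le> 1 \<longrightarrow>
        g (a *\<^sub>R x + (1 - a) *\<^sub>R y) \<le> a * g x + (1 - a) * g y - a * (1 - a) * mu * (norm (x - y))\<^sup>2)"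

end

theory Submission
  imports Defs
begin

lemma sc_convex:
  assumes "strongly_convex_on UNIV mu g" "mu \<ge> 0"
  shows "convex_on UNIV g"
proof (rule convex_onI)
  fix t :: real and x y :: "'a::real_normed_vector"
  assume t: "0 < t" "t < 1"
  have "g (t *\<^sub>R y + (1 - t) *\<^sub>R x) \<le> t * g y + (1 - t) * g x - t * (1 - t) * mu * (norm (y - x))\<^sup>2"
    using assms(1) t unfolding strongly_convex_on_def by auto
  moreover have "t * (1 - t) * mu * (norm (y - x))\<^sup>2 \<ge> 0" using t assms(2) by simp
  ultimately show "g ((1 - t) *\<^sub>R x + t *\<^sub>R y) \<le> (1 - t) * g x + t * g y"
    by (simp add: add.commute)
qed simp

lemma aux_eq:
  fixes c e :: real assumes "c \<noteq> 0" shows "(1 - (1 - e / c) / 2) * c = (c + e) / 2"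
  using assms by (simp add: field_simps)

lemma local_global:
  fixes f :: "'a::real_normed_vector \<Rightarrow> real"
  assumes cf: "convex_on UNIV f" and zi: "z \<in> interior D" and zmin: "\<forall>p\<in>D. f z \<le> f p"
  shows "f z \<le> f w"
proof (rule ccontr)
  assume "\<not> f z \<le> f w"
  hence fw: "f w < f z" by simp
  hence wz: "w \<noteq> z" by auto
  obtain e where e: "e > 0" "ball z e \<subseteq> D" using zi mem_interior by blast
  define t where "t = min (1/2) (e / (2 * norm (w - z)))"
  have nz: "norm (w - z) > 0" using wz by simp
  have t0: "t > 0" "t \<le> 1" using e nz by (auto simp: t_def)
  define p where "p = (1 - t) *\<^sub>R z + t *\<^sub>R w"
  have "dist z p = t * norm (w - z)"
    by (simp add: p_def dist_norm algebra_simps flip: scaleR_diff_right) (use t0 in \<open>simp add: norm_minus_commute\<close>)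
  also have "\<dots> \<le> e / (2 * norm (w - z)) * norm (w - z)"
    by (rule mult_right_mono) (auto simp: t_def)
  also have "\<dots> < e" using nz e by simp
  finally have "p \<in> D" using e by auto
  hence "f z \<le> f p" using zmin by auto
  also have "f p \<le> (1 - t) * f z + t * f w"
    unfolding p_def using convex_onD[OF cf] t0 by simp
  also have "\<dots> < f z" using fw t0 by (simp add: algebra_simps)
  finally show False by simp
qed

theorem lemma1p1p8:
  fixes fs :: "nat \<Rightarrow> real^'n \<Rightarrow> real"
    and mus :: "nat \<Rightarrow> real"
    and m :: nat
    and f :: "real^'n \<Rightarrow> real"
    and xstar :: "real^'n"
    and eps :: real
  assumes m_pos: "m \<ge> 1"
    and mus_pos: "\<forall>j\<in>{1..m}. mus j > 0"
    and strong: "\<forall>j\<in>{1..m}. strongly_convex_on UNIV (mus j) (fs j)"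
    and Dj_int: "\<forall>j\<in>{1..m}. interior {x. fs j x \<le> 0} \<noteq> {}"
    and slater: "\<exists>x. \<forall>j\<in>{1..m}. fs j x < 0"
    and f_convex: "convex_on UNIV f"
    and min_attained: "\<exists>x\<in>{x. \<forall>j\<in>{1..m}. fs j x \<le> 0}. \<forall>z\<in>{x. \<forall>j\<in>{1..m}. fs j x \<le> 0}. f x \<le> f z"
    and no_abs_min_in_int: "\<forall>x\<in>interior {x. \<forall>j\<in>{1..m}. fs j x \<le> 0}. \<not> (\<forall>z. f x \<le> f z)"
    and xstar_in: "xstar \<in> {x. \<forall>j\<in>{1..m}. fs j x \<le> 0}"
    and xstar_min: "\<forall>z\<in>{x. \<forall>j\<in>{1..m}. fs j x \<le> 0}. f xstar \<le> f z"
    and eps_pos: "eps > 0"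
  shows "\<forall>y \<in> {x. Max ((\<lambda>j. fs j x) ` {1..m}) \<le> eps} \<inter> {x. f x \<le> f xstar}.
           y \<noteq> xstar \<longrightarrow>
             norm (y - xstar) \<le> sqrt (eps / Min (mus ` {1..m})) \<and>
             (\<forall>L. L-lipschitz_on UNIV f \<longrightarrow>
                \<bar>f y - f xstar\<bar> \<le> L * sqrt (eps / Min (mus ` {1..m})))"
proof (intro ballI impI)
  fix y assume yin: "y \<in> {x. Max ((\<lambda>j. fs j x) ` {1..m}) \<le> eps} \<inter> {x. f x \<le> f xstar}"
    and yne: "y \<noteq> xstar"
  define D where "D = {x. \<forall>j\<in>{1..m}. fs j x \<le> 0}"
  define mu where "mu = Min (mus ` {1..m})"
  have mu_pos: "mu > 0" unfolding mu_def using mus_pos m_pos by (subst Min_gr_iff) auto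
  have mu_le: "mu \<le> mus j" if "j \<in> {1..m}" for j unfolding mu_def using that by simp
  have fy: "fs j y \<le> eps" if "j \<in> {1..m}" for j
  proof -
    have "fs j y \<le> Max ((\<lambda>j. fs j y) ` {1..m})" using that by simp
    thus ?thesis using yin by simp
  qed
  have fyle: "f y \<le> f xstar" using yin by simp
  define d where "d = norm (y - xstar)"
  have dpos: "d > 0" using yne by (simp add: d_def)
  have cont: "continuous_on UNIV (fs j)" if "j \<in> {1..m}" for j
    using convex_on_continuous[OF open_UNIV sc_convex] strong mus_pos that
    by (meson less_imp_le)
  have key: "mu * d\<^sup>2 \<le> eps"
  proof (rule ccontr)
    assume "\<not> mu * d\<^sup>2 \<le> eps"
    hence big: "eps < mu * d\<^sup>2" by simp
    have md: "mu * d\<^sup>2 > 0" using mu_pos dpos by simp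
    define a where "a = (1 - eps / (mu * d\<^sup>2)) / 2"
    have q: "eps / (mu * d\<^sup>2) < 1" "eps / (mu * d\<^sup>2) > 0" using big md eps_pos by auto
    have a01: "0 < a" "a < 1" using q by (auto simp: a_def)
    have ineq: "eps < (1 - a) * (mu * d\<^sup>2)"
    proof -
      have "(1 - a) * (mu * d\<^sup>2) = (mu * d\<^sup>2 + eps) / 2"
        unfolding a_def by (rule aux_eq) (use md in linarith)
      thus ?thesis using big by simp
    qed
    define z where "z = a *\<^sub>R y + (1 - a) *\<^sub>R xstar"
    have fzneg: "fs j z < 0" if j: "j \<in> {1..m}" for j
    proof -
      have "fs j z \<le> a * fs j y + (1 - a) * fs j xstar - a * (1 - a) * mus j * d\<^sup>2"
        using strong j a01 unfolding strongly_convex_on_def z_def d_def by auto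
      also have "\<dots> \<le> a * eps + 0 - a * (1 - a) * mu * d\<^sup>2"
      proof -
        have "a * fs j y \<le> a * eps" using fy[OF j] a01 by simp
        moreover have "(1 - a) * fs j xstar \<le> 0" using xstar_in j a01
          by (simp add: mult_nonneg_nonpos)
        moreover have "a * (1 - a) * mu * d\<^sup>2 \<le> a * (1 - a) * mus j * d\<^sup>2"
          using mu_le[OF j] a01 by (intro mult_right_mono mult_left_mono) auto
        ultimately show ?thesis by linarith
      qed
      also have "\<dots> = a * (eps - (1 - a) * (mu * d\<^sup>2))" by (simp add: algebra_simps)
      also have "\<dots> < 0" using a01 ineq by (simp add: mult_pos_neg)
      finally show ?thesis .
    qed
    define S where "S = (\<Inter>j\<in>{1..m}. {x. fs j x < 0})"
    have "open S" unfolding S_def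
      by (intro open_INT) (auto intro!: open_Collect_less cont continuous_on_const)
    moreover have "S \<subseteq> D"
    proof
      fix x assume "x \<in> S"
      hence "\<forall>j\<in>{1..m}. fs j x < 0" unfolding S_def by simp
      hence "\<forall>j\<in>{1..m}. fs j x \<le> 0" using less_imp_le by metis
      thus "x \<in> D" unfolding D_def by simp
    qed
    moreover have "z \<in> S" unfolding S_def using fzneg by auto
    ultimately have zint: "z \<in> interior D" by (meson interior_maximal interior_open subsetD)
    have "z \<in> D" using \<open>z \<in> S\<close> \<open>S \<subseteq> D\<close> by auto
    have fz: "f z \<le> f xstar"
    proof -
      have "f z \<le> (1 - a) * f xstar + a * f y"
        using convex_onD[OF f_convex, of a xstar y] a01 by (simp add: z_def add.commute)
      also have "\<dots> \<le> f xstar"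
      proof -
        have "a * f y \<le> a * f xstar" using fyle a01 by (simp add: mult_left_mono)
        thus ?thesis by (simp add: algebra_simps)
      qed
      finally show ?thesis .
    qed
    have zmin: "\<forall>p\<in>D. f z \<le> f p" using fz xstar_min unfolding D_def by force
    have "\<forall>w. f z \<le> f w" using local_global[OF f_convex zint zmin] by blast
    thus False using no_abs_min_in_int zint unfolding D_def by blast
  qed
  have dle: "d \<le> sqrt (eps / mu)"
    using key mu_pos by (intro real_le_rsqrt) (simp add: field_simps)
  show "norm (y - xstar) \<le> sqrt (eps / Min (mus ` {1..m})) \<and>
             (\<forall>L. L-lipschitz_on UNIV f \<longrightarrow>
                \<bar>f y - f xstar\<bar> \<le> L * sqrt (eps / Min (mus ` {1..m})))"
  proof (intro conjI allI impI)
    show "norm (y - xstar) \<le> sqrt (eps / Min (mus ` {1..m}))" using dle by (simp add: d_def mu_def)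
    fix L assume L: "L-lipschitz_on UNIV f"
    have "\<bar>f y - f xstar\<bar> \<le> L * d"
      using lipschitz_onD[OF L, of y xstar] by (simp add: dist_real_def dist_norm d_def)
    also have "\<dots> \<le> L * sqrt (eps / mu)" using dle lipschitz_on_nonneg[OF L] by (simp add: mult_left_mono)
    finally show "\<bar>f y - f xstar\<bar> \<le> L * sqrt (eps / Min (mus ` {1..m}))" by (simp add: mu_def)
  qed
qed

end
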